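(* Let $A_1A_2A_3A_4$ be a (non-degenerate) tetrahedron in $\mathbb{R}^3$ with $A_1A_4+A_2A_3>A_1A_2+A_3A_4$. Let $F$ be a minimizer of $X\mapsto |A_1X|+|A_2X|+|A_3X|+|A_4X|$ lying in the interior of the tetrahedron, and let $T_{12}$, $T_{34}$ be the points where the line through $F$ meeting both lines $A_1A_2$ and $A_3A_4$ intersects these lines. Let $A_1''\in$ line $A_1A_2$, $A_4''\in$ line $A_3A_4$ be the endpoints of the common perpendicular of the two (skew) lines, $H=|A_1''A_4''|$, and assume $A_1''\notin[A_1,A_2]$ with $A_1$ between $A_1''$ and $A_2$, and $A_4''\notin[A_4,A_3]$ with $A_4$ between $A_4''$ and $A_3$. Let $\varphi$ be the angle between $\overrightarrow{A_1A_2}$ and $\overrightarrow{A_4A_3}$, $a_{12}=|A_1A_2|$, $a_{34}=|A_3A_4|$, $M_{12},M_{34}$ the midpoints of $A_1A_2$, $A_3A_4$, and put $t_{12}=|A_1''T_{12}|$, $t_{34}=|A_4''T_{34}|$, $k_1=|A_1''A_1|$, $k_2=|A_4''A_4|$, $m_{12}=|A_1''M_{12}|$, $m_{34}=|A_4''M_{34}|$, $\theta=\angle A_4FA_3$. Then $$\frac{t_{34}-t_{12}\cos\varphi}{\sqrt{H^2+t_{12}^2\sin^2\varphi}}=\frac{m_{34}-t_{34}}{\frac{a_{34}}{2}\tan\frac{\theta}{2}},\qquad \frac{t_{12}-t_{34}\cos\varphi}{\sqrt{H^2+t_{34}^2\sin^2\varphi}}=\frac{m_{12}-t_{12}}{\frac{a_{12}}{2}\tan\frac{\theta}{2}},$$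 and $$\cot\frac{\theta}{2}=\frac{H^2+k_1(t_{12}-t_{34}\cos\varphi)+k_2(t_{34}-t_{12}\cos\varphi)}{(t_{12}-k_1)\sqrt{H^2+t_{34}^2\sin^2\varphi}+(t_{34}-k_2)\sqrt{H^2+t_{12}^2\sin^2\varphi}}.$$
   Context: $|XY|$ denotes Euclidean distance and $\angle XYZ\in[0,\pi]$ the angle at $Y$. $F$ is the (unweighted) Fermat–Torricelli point of the four vertices; the line $T_{12}T_{34}$ through $F$ is called its Simpson line. *)

theory Defs
  imports "HOL-Analysis.Analysis"
begin

definition vec_angle :: "real^3 \<Rightarrow> real^3 \<Rightarrow> real" where
  "vec_angle u v = arccos (inner u v / (norm u * norm v))"

definition pt_angle :: "real^3 \<Rightarrow> real^3 \<Rightarrow> real^3 \<Rightarrow> real" where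
  "pt_angle X Y Z = vec_angle (X - Y) (Z - Y)"

end

theory Submission
  imports Defs
begin



lemma noncop_indep:
  fixes A1 A2 A3 A4 :: "real^3"
  assumes "\<not> coplanar {A1,A2,A3,A4}"
  shows "distinct [A1,A2,A3,A4] \<and> \<not> affine_dependent {A1,A2,A3,A4}"
proof
  show "distinct [A1,A2,A3,A4]"
  proof (rule ccontr)
    assume "\<not> distinct [A1,A2,A3,A4]"
    hence "card {A1,A2,A3,A4} \<le> 3"
      by (auto simp: card_insert_if)
    hence "coplanar {A1,A2,A3,A4}" by (intro coplanar_small) auto
    with assms show False by blast
  qed
  show "\<not> affine_dependent {A1,A2,A3,A4}"
  proof
    assume "affine_dependent {A1,A2,A3,A4}"
    then obtain x where x: "x \<in> {A1,A2,A3,A4}" "x \<in> affine hull ({A1,A2,A3,A4} - {x})"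
      unfolding affine_dependent_def by blast
    have sub: "{A1,A2,A3,A4} \<subseteq> affine hull ({A1,A2,A3,A4} - {x})"
    proof
      fix y assume y: "y \<in> {A1,A2,A3,A4}"
      show "y \<in> affine hull ({A1,A2,A3,A4} - {x})"
      proof (cases "y = x")
        case True thus ?thesis using x(2) by simp
      next
        case False thus ?thesis using y by (intro hull_inc) simp
      qed
    qed
    have "card ({A1,A2,A3,A4} - {x}) \<le> 3"
    proof -
      have "card {A1,A2,A3,A4} \<le> 4" by (simp add: card_insert_le_m1)
      thus ?thesis using x(1) by (simp add: card_Diff_singleton)
    qed
    hence "coplanar ({A1,A2,A3,A4} - {x})" by (intro coplanar_small) auto
    hence "coplanar (affine hull ({A1,A2,A3,A4} - {x}))" by (simp add: coplanar_affine_hull_coplanar)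
    with sub have "coplanar {A1,A2,A3,A4}" by (rule coplanar_subset[rotated])
    with assms show False by blast
  qed
qed

lemma indep4:
  fixes A1 A2 A3 A4 :: "real^3"
  assumes nd: "\<not> coplanar {A1,A2,A3,A4}"
    and eq: "x1 *\<^sub>R A1 + x2 *\<^sub>R A2 + x3 *\<^sub>R A3 + x4 *\<^sub>R A4 = 0"
    and s: "x1 + x2 + x3 + x4 = 0"
  shows "x1 = 0 \<and> x2 = 0 \<and> x3 = 0 \<and> x4 = 0"
proof (rule ccontr)
  assume nz: "\<not> (x1 = 0 \<and> x2 = 0 \<and> x3 = 0 \<and> x4 = 0)"
  have di: "distinct [A1,A2,A3,A4]" and ind: "\<not> affine_dependent {A1,A2,A3,A4}"
    using noncop_indep[OF nd] by auto
  define U where "U = (\<lambda>v. if v = A1 then x1 else if v = A2 then x2 else if v = A3 then x3 else x4)"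
  have ne: "A1 \<noteq> A2" "A1 \<noteq> A3" "A1 \<noteq> A4" "A2 \<noteq> A3" "A2 \<noteq> A4" "A3 \<noteq> A4" using di by auto
  have "sum U {A1,A2,A3,A4} = x1 + x2 + x3 + x4" using ne by (simp add: U_def ne[symmetric])
  moreover have "(\<Sum>v\<in>{A1,A2,A3,A4}. U v *\<^sub>R v) = x1 *\<^sub>R A1 + x2 *\<^sub>R A2 + x3 *\<^sub>R A3 + x4 *\<^sub>R A4"
    using ne by (simp add: U_def ne[symmetric])
  moreover have "\<exists>v\<in>{A1,A2,A3,A4}. U v \<noteq> 0"
  proof -
    have "U A1 = x1" "U A2 = x2" "U A3 = x3" "U A4 = x4" using ne by (simp_all add: U_def ne[symmetric])
    thus ?thesis using nz by blast
  qed
  ultimately have "\<exists>U. sum U {A1,A2,A3,A4} = 0 \<and> (\<exists>v\<in>{A1,A2,A3,A4}. U v \<noteq> 0) \<and> (\<Sum>v\<in>{A1,A2,A3,A4}. U v *\<^sub>R v) = 0"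
    using eq s by (intro exI[of _ U]) simp
  hence "affine_dependent {A1,A2,A3,A4}"
    by (subst affine_dependent_explicit_finite) auto
  with ind show False by blast
qed


lemma nd: fixes a x :: "real^3" assumes "x \<noteq> a"
  shows "((\<lambda>X. dist a X) has_derivative (\<lambda>h. h \<bullet> sgn (x - a))) (at x)"
proof -
  have "(norm has_derivative (\<lambda>h. h \<bullet> sgn (x - a))) (at (x - a))"
    using has_derivative_norm[of "x - a"] assms by simp
  from has_derivative_compose[OF has_derivative_diff[OF has_derivative_ident has_derivative_const] this]
  have "((\<lambda>X. norm (X - a)) has_derivative (\<lambda>h. h \<bullet> sgn (x - a))) (at x)" by simp
  moreover have "(\<lambda>X. dist a X) = (\<lambda>X. norm (X - a))" by (metis dist_commute dist_norm)
  ultimately show ?thesis by simp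
qed

lemma fermat_grad:
  fixes A1 A2 A3 A4 F :: "real^3"
  assumes Fmin: "\<forall>X. dist A1 F + dist A2 F + dist A3 F + dist A4 F
                   \<le> dist A1 X + dist A2 X + dist A3 X + dist A4 X"
   and "F \<noteq> A1" "F \<noteq> A2" "F \<noteq> A3" "F \<noteq> A4"
  shows "sgn (F - A1) + sgn (F - A2) + sgn (F - A3) + sgn (F - A4) = 0"
proof -
  define s where "s = sgn (F - A1) + sgn (F - A2) + sgn (F - A3) + sgn (F - A4)"
  let ?f = "\<lambda>X. dist A1 X + dist A2 X + dist A3 X + dist A4 X"
  have d: "(?f has_derivative (\<lambda>h. h \<bullet> sgn (F - A1) + h \<bullet> sgn (F - A2) + h \<bullet> sgn (F - A3) + h \<bullet> sgn (F - A4))) (at F)"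
    using has_derivative_add[OF has_derivative_add[OF has_derivative_add[OF nd nd] nd] nd] assms by blast
  have "eventually (\<lambda>y. ?f F \<le> ?f y) (at F)"
    using Fmin by (intro always_eventually) blast
  from fun_cong[OF has_derivative_local_min[OF d this], of s]
  have "s \<bullet> s = 0" unfolding s_def by (simp only: inner_add_right)
  then show ?thesis unfolding s_def by simp
qed

lemma aff2: fixes x a b :: "real^3" assumes "x \<in> affine hull {a, b}" shows "\<exists>t. x = a + t *\<^sub>R (b - a)"
proof -
  obtain u v where "x = u *\<^sub>R a + v *\<^sub>R b" "u + v = 1" using assms unfolding affine_hull_2 by blast
  hence "x = a + v *\<^sub>R (b - a)" by (simp add: algebra_simps) (metis add_diff_cancel_right' scaleR_collapse)
  thus ?thesis by blast
qed


lemma scalar_core: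
  fixes r1 r2 r3 r4 c C H a12 a34 s1 s4 sph t12 t34 k1 k2 m12 m34 \<kappa> :: real
  assumes rpos: "r1 > 0" "r2 > 0" "r3 > 0" "r4 > 0"
    and Hpos: "H > 0" and apos: "a12 > 0" "a34 > 0"
    and cb: "-1 \<le> c" "c \<le> 1"
    and kap: "\<kappa> = r1*r2/(r1+r2) + r3*r4/(r3+r4)"
    and t12: "t12 = (r1/(r1+r2) - s1)*a12" and t34: "t34 = (r4/(r3+r4) - s4)*a34"
    and k1: "k1 = -s1*a12" and k2: "k2 = -s4*a34"
    and m12: "m12 = (1/2 - s1)*a12" and m34: "m34 = (1/2 - s4)*a34"
    and E1: "a12\<^sup>2 = r1\<^sup>2 + r2\<^sup>2 - 2*r1*r2*c"
    and E2: "a34\<^sup>2 = r3\<^sup>2 + r4\<^sup>2 - 2*r3*r4*c"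
    and E3: "H\<^sup>2 + t12\<^sup>2 + t34\<^sup>2 - 2*t12*t34*C = \<kappa>\<^sup>2*(2+2*c)"
    and E4: "a34*(t34 - t12*C) = \<kappa>*(r3-r4)*(1+c)"
    and E5: "a12*(t34*C - t12) = \<kappa>*(r1-r2)*(1+c)"
    and sph: "sph\<^sup>2 = 1 - C\<^sup>2"
  shows "((t34 - t12 * C) / sqrt (H\<^sup>2 + t12\<^sup>2 * sph\<^sup>2)
           = (m34 - t34) / (a34 / 2 * (sqrt (1 - c\<^sup>2) / (1 + c))))
       \<and> ((t12 - t34 * C) / sqrt (H\<^sup>2 + t34\<^sup>2 * sph\<^sup>2)
           = (m12 - t12) / (a12 / 2 * (sqrt (1 - c\<^sup>2) / (1 + c))))
       \<and> (1 + c) / sqrt (1 - c\<^sup>2)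
           = (H\<^sup>2 + k1 * (t12 - t34 * C) + k2 * (t34 - t12 * C))
             / ((t12 - k1) * sqrt (H\<^sup>2 + t34\<^sup>2 * sph\<^sup>2)
                + (t34 - k2) * sqrt (H\<^sup>2 + t12\<^sup>2 * sph\<^sup>2))"
proof -
  have rr: "r1 + r2 \<noteq> 0" "r3 + r4 \<noteq> 0" "r1 + r2 > 0" "r3 + r4 > 0" using rpos by auto
  have kpos: "\<kappa> > 0" using rpos unfolding kap by (simp add: add_pos_pos)
  have d4: "t34 - t12*C = \<kappa>*(r3-r4)*(1+c)/a34" using E4 apos by (simp add: field_simps)
  have d1: "t12 - t34*C = - \<kappa>*(r1-r2)*(1+c)/a12" using E5 apos by (simp add: field_simps)
  have X1a: "H\<^sup>2 + t12\<^sup>2 * sph\<^sup>2 = \<kappa>\<^sup>2*(2+2*c) - (t34 - t12*C)\<^sup>2"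
    unfolding sph using E3 by (simp add: power2_eq_square algebra_simps)
  have X2a: "H\<^sup>2 + t34\<^sup>2 * sph\<^sup>2 = \<kappa>\<^sup>2*(2+2*c) - (t12 - t34*C)\<^sup>2"
    unfolding sph using E3 by (simp add: power2_eq_square algebra_simps)
  have X1: "H\<^sup>2 + t12\<^sup>2 * sph\<^sup>2 = (\<kappa>*(r3+r4)/a34)\<^sup>2 * (1 - c\<^sup>2)"
  proof -
    have id: "(2+2*c)*a34\<^sup>2 - (r3-r4)\<^sup>2*(1+c)\<^sup>2 = (r3+r4)\<^sup>2*(1-c\<^sup>2)"
      unfolding E2 by (simp add: power2_eq_square algebra_simps)
    have "H\<^sup>2 + t12\<^sup>2 * sph\<^sup>2 = \<kappa>\<^sup>2*(2+2*c) - ( \<kappa>*(r3-r4)*(1+c)/a34)\<^sup>2" using X1a d4 by simp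
    also have "\<dots> = \<kappa>\<^sup>2*((2+2*c)*a34\<^sup>2 - (r3-r4)\<^sup>2*(1+c)\<^sup>2)/a34\<^sup>2"
      using apos by (simp add: field_simps power2_eq_square)
    also have "\<dots> = \<kappa>\<^sup>2*((r3+r4)\<^sup>2*(1-c\<^sup>2))/a34\<^sup>2" by (simp only: id)
    also have "\<dots> = (\<kappa>*(r3+r4)/a34)\<^sup>2 * (1 - c\<^sup>2)" by (simp add: power_divide power_mult_distrib)
    finally show ?thesis .
  qed
  have X2: "H\<^sup>2 + t34\<^sup>2 * sph\<^sup>2 = (\<kappa>*(r1+r2)/a12)\<^sup>2 * (1 - c\<^sup>2)"
  proof -
    have id: "(2+2*c)*a12\<^sup>2 - (r1-r2)\<^sup>2*(1+c)\<^sup>2 = (r1+r2)\<^sup>2*(1-c\<^sup>2)"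
      unfolding E1 by (simp add: power2_eq_square algebra_simps)
    have "H\<^sup>2 + t34\<^sup>2 * sph\<^sup>2 = \<kappa>\<^sup>2*(2+2*c) - (- \<kappa>*(r1-r2)*(1+c)/a12)\<^sup>2" using X2a d1 by simp
    also have "\<dots> = \<kappa>\<^sup>2*((2+2*c)*a12\<^sup>2 - (r1-r2)\<^sup>2*(1+c)\<^sup>2)/a12\<^sup>2"
      using apos by (simp add: field_simps power2_eq_square)
    also have "\<dots> = \<kappa>\<^sup>2*((r1+r2)\<^sup>2*(1-c\<^sup>2))/a12\<^sup>2" by (simp only: id)
    also have "\<dots> = (\<kappa>*(r1+r2)/a12)\<^sup>2 * (1 - c\<^sup>2)" by (simp add: power_divide power_mult_distrib)
    finally show ?thesis .
  qed
  have cc: "1 - c\<^sup>2 > 0"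
  proof -
    have "H\<^sup>2 + t12\<^sup>2 * sph\<^sup>2 > 0" using Hpos by (simp add: add_pos_nonneg)
    hence "(\<kappa>*(r3+r4)/a34)\<^sup>2 * (1 - c\<^sup>2) > 0" using X1 by simp
    thus ?thesis by (simp add: zero_less_mult_iff)
  qed
  define q where "q = sqrt (1 - c\<^sup>2)"
  have qpos: "q > 0" using cc by (simp add: q_def)
  have c1: "1 + c > 0"
  proof (rule ccontr)
    assume "\<not> 0 < 1 + c" hence "c = -1" using cb by simp
    thus False using cc by simp
  qed
  define R12 where "R12 = r1 + r2"
  define R34 where "R34 = r3 + r4"
  have Rp: "R12 > 0" "R34 > 0" using rpos by (simp_all add: R12_def R34_def)
  have S1: "sqrt (H\<^sup>2 + t12\<^sup>2 * sph\<^sup>2) = \<kappa>*R34/a34 * q"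
    unfolding X1 q_def real_sqrt_mult R34_def using kpos rpos apos by simp
  have S2: "sqrt (H\<^sup>2 + t34\<^sup>2 * sph\<^sup>2) = \<kappa>*R12/a12 * q"
    unfolding X2 q_def real_sqrt_mult R12_def using kpos rpos apos by simp
  have g1: "(t34 - t12 * C) / sqrt (H\<^sup>2 + t12\<^sup>2 * sph\<^sup>2) = (m34 - t34) / (a34 / 2 * (q / (1 + c)))"
  proof -
    have mt: "m34 - t34 = a34*(r3 - r4)/(2*R34)" unfolding m34 t34 R34_def using rr by (simp add: field_simps)
    have "(t34 - t12 * C) / sqrt (H\<^sup>2 + t12\<^sup>2 * sph\<^sup>2) = (\<kappa>*(r3-r4)*(1+c)/a34)/(\<kappa>*R34/a34 * q)"
      unfolding S1 d4 by simp
    also have "\<dots> = (r3-r4)*(1+c)/(R34*q)" using kpos apos qpos Rp by (simp add: field_simps)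
    also have "\<dots> = (m34 - t34) / (a34 / 2 * (q / (1 + c)))" unfolding mt using apos qpos Rp c1 by (simp add: field_simps)
    finally show ?thesis .
  qed
  have g2: "(t12 - t34 * C) / sqrt (H\<^sup>2 + t34\<^sup>2 * sph\<^sup>2) = (m12 - t12) / (a12 / 2 * (q / (1 + c)))"
  proof -
    have mt: "m12 - t12 = a12*(r2 - r1)/(2*R12)" unfolding m12 t12 R12_def using rr by (simp add: field_simps)
    have "(t12 - t34 * C) / sqrt (H\<^sup>2 + t34\<^sup>2 * sph\<^sup>2) = (- \<kappa>*(r1-r2)*(1+c)/a12)/(\<kappa>*R12/a12 * q)"
      unfolding S2 d1 by simp
    also have "\<dots> = (r2-r1)*(1+c)/(R12*q)" using kpos apos qpos Rp by (simp add: field_simps)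
    also have "\<dots> = (m12 - t12) / (a12 / 2 * (q / (1 + c)))" unfolding mt using apos qpos Rp c1 by (simp add: field_simps)
    finally show ?thesis .
  qed
  have N: "H\<^sup>2 + k1 * (t12 - t34 * C) + k2 * (t34 - t12 * C)
       = \<kappa>\<^sup>2*(2+2*c) - (t12 - k1)*(t12 - t34*C) - (t34 - k2)*(t34 - t12*C)"
    using E3 by (simp add: power2_eq_square algebra_simps)
  have tk1: "t12 - k1 = r1/R12*a12" unfolding t12 k1 R12_def by (simp add: algebra_simps)
  have tk2: "t34 - k2 = r4/R34*a34" unfolding t34 k2 R34_def by (simp add: algebra_simps)
  have kap': "\<kappa> = r1*r2/R12 + r3*r4/R34" unfolding kap R12_def R34_def ..
  have N2: "H\<^sup>2 + k1 * (t12 - t34 * C) + k2 * (t34 - t12 * C) = \<kappa>*(1+c)*(r1+r4)"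
  proof -
    have "H\<^sup>2 + k1 * (t12 - t34 * C) + k2 * (t34 - t12 * C)
       = \<kappa>*(1+c)*(2*\<kappa> + r1/R12*(r1-r2) - r4/R34*(r3-r4))"
      unfolding N unfolding tk1 tk2 d1 d4 using apos Rp by (simp add: field_simps power2_eq_square)
    also have "2*\<kappa> + r1/R12*(r1-r2) - r4/R34*(r3-r4) = r1 + r4"
    proof -
      have "2*\<kappa> + r1/R12*(r1-r2) - r4/R34*(r3-r4) = (2*r1*r2 + r1*(r1-r2))/R12 + (2*r3*r4 - r4*(r3-r4))/R34"
        unfolding kap' using Rp by (simp add: field_simps)
      also have "2*r1*r2 + r1*(r1-r2) = r1*R12" unfolding R12_def by (simp add: algebra_simps)
      also have "2*r3*r4 - r4*(r3-r4) = r4*R34" unfolding R34_def by (simp add: algebra_simps)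
      finally show ?thesis using Rp by simp
    qed
    finally show ?thesis .
  qed
  have D: "(t12 - k1) * sqrt (H\<^sup>2 + t34\<^sup>2 * sph\<^sup>2) + (t34 - k2) * sqrt (H\<^sup>2 + t12\<^sup>2 * sph\<^sup>2)
      = \<kappa>*q*(r1+r4)"
    unfolding tk1 tk2 S1 S2 using Rp apos by (simp add: field_simps)
  have g3: "(1 + c) / q = (H\<^sup>2 + k1 * (t12 - t34 * C) + k2 * (t34 - t12 * C))
             / ((t12 - k1) * sqrt (H\<^sup>2 + t34\<^sup>2 * sph\<^sup>2) + (t34 - k2) * sqrt (H\<^sup>2 + t12\<^sup>2 * sph\<^sup>2))"
  proof -
    define R where "R = r1 + r4"
    have "R > 0" using rpos by (simp add: R_def)
    thus ?thesis unfolding N2 D R_def[symmetric] using kpos qpos by (simp add: field_simps)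
  qed
  show ?thesis using g1 g2 g3 unfolding q_def by blast
qed



theorem theorem5:
  fixes A1 A2 A3 A4 F T12 T34 A1'' A4'' :: "real^3"
  assumes nondeg: "\<not> coplanar {A1, A2, A3, A4}"
    and ineq: "dist A1 A4 + dist A2 A3 > dist A1 A2 + dist A3 A4"
    and Fmin: "\<forall>X. dist A1 F + dist A2 F + dist A3 F + dist A4 F
                   \<le> dist A1 X + dist A2 X + dist A3 X + dist A4 X"
    and Fint: "F \<in> interior (convex hull {A1, A2, A3, A4})"
    and T12: "T12 \<in> affine hull {A1, A2}"
    and T34: "T34 \<in> affine hull {A3, A4}"
    and FT: "collinear {F, T12, T34}"
    and A1'': "A1'' \<in> affine hull {A1, A2}"
    and A4'': "A4'' \<in> affine hull {A3, A4}"
    and perp1: "inner (A4'' - A1'') (A2 - A1) = 0"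
    and perp2: "inner (A4'' - A1'') (A3 - A4) = 0"
    and pos1: "A1'' \<notin> closed_segment A1 A2" "A1 \<in> closed_segment A1'' A2"
    and pos4: "A4'' \<notin> closed_segment A4 A3" "A4 \<in> closed_segment A4'' A3"
  defines "H \<equiv> dist A1'' A4''"
    and "\<phi> \<equiv> vec_angle (A2 - A1) (A3 - A4)"
    and "a12 \<equiv> dist A1 A2"
    and "a34 \<equiv> dist A3 A4"
    and "t12 \<equiv> dist A1'' T12"
    and "t34 \<equiv> dist A4'' T34"
    and "k1 \<equiv> dist A1'' A1"
    and "k2 \<equiv> dist A4'' A4"
    and "m12 \<equiv> dist A1'' (midpoint A1 A2)"
    and "m34 \<equiv> dist A4'' (midpoint A3 A4)"
    and "\<theta> \<equiv> pt_angle A4 F A3"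
  shows "((t34 - t12 * cos \<phi>) / sqrt (H\<^sup>2 + t12\<^sup>2 * (sin \<phi>)\<^sup>2)
           = (m34 - t34) / (a34 / 2 * tan (\<theta> / 2)))
       \<and> ((t12 - t34 * cos \<phi>) / sqrt (H\<^sup>2 + t34\<^sup>2 * (sin \<phi>)\<^sup>2)
           = (m12 - t12) / (a12 / 2 * tan (\<theta> / 2)))
       \<and> cot (\<theta> / 2)
           = (H\<^sup>2 + k1 * (t12 - t34 * cos \<phi>) + k2 * (t34 - t12 * cos \<phi>))
             / ((t12 - k1) * sqrt (H\<^sup>2 + t34\<^sup>2 * (sin \<phi>)\<^sup>2)
                + (t34 - k2) * sqrt (H\<^sup>2 + t12\<^sup>2 * (sin \<phi>)\<^sup>2))"
proof -
  have di: "distinct [A1,A2,A3,A4]" and ind: "\<not> affine_dependent {A1,A2,A3,A4}"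
    using noncop_indep[OF nondeg] by auto
  have ne: "A1 \<noteq> A2" "A3 \<noteq> A4" using di by auto
  have FA: "F \<noteq> A1" "F \<noteq> A2" "F \<noteq> A3" "F \<noteq> A4"
  proof -
    have "\<And>x. x \<in> {A1,A2,A3,A4} \<Longrightarrow> x \<notin> interior (convex hull {A1,A2,A3,A4})"
      using extreme_point_of_convex_hull_affine_independent[OF ind] extreme_point_not_in_interior by blast
    thus "F \<noteq> A1" "F \<noteq> A2" "F \<noteq> A3" "F \<noteq> A4" using Fint by auto
  qed
  have g0: "sgn (F - A1) + sgn (F - A2) + sgn (F - A3) + sgn (F - A4) = 0"
    by (rule fermat_grad[OF Fmin FA])
  define r1 where "r1 = norm (A1 - F)"
  define r2 where "r2 = norm (A2 - F)"
  define r3 where "r3 = norm (A3 - F)"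
  define r4 where "r4 = norm (A4 - F)"
  have rpos: "r1 > 0" "r2 > 0" "r3 > 0" "r4 > 0" using FA by (auto simp: r1_def r2_def r3_def r4_def)
  define u1 where "u1 = sgn (A1 - F)"
  define u2 where "u2 = sgn (A2 - F)"
  define u3 where "u3 = sgn (A3 - F)"
  define u4 where "u4 = sgn (A4 - F)"
  have Aeq: "A1 = F + r1 *\<^sub>R u1" "A2 = F + r2 *\<^sub>R u2" "A3 = F + r3 *\<^sub>R u3" "A4 = F + r4 *\<^sub>R u4"
    using rpos by (simp_all add: r1_def r2_def r3_def r4_def u1_def u2_def u3_def u4_def sgn_div_norm)
  have nu: "norm u1 = 1" "norm u2 = 1" "norm u3 = 1" "norm u4 = 1"
    using FA by (simp_all add: u1_def u2_def u3_def u4_def norm_sgn)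
  have uu: "u1 \<bullet> u1 = 1" "u2 \<bullet> u2 = 1" "u3 \<bullet> u3 = 1" "u4 \<bullet> u4 = 1"
    using nu by (simp_all add: power2_norm_eq_inner[symmetric])
  have usum: "u1 + u2 + u3 + u4 = 0"
  proof -
    have "sgn (F - A1) = - u1" "sgn (F - A2) = - u2" "sgn (F - A3) = - u3" "sgn (F - A4) = - u4"
      unfolding u1_def u2_def u3_def u4_def by (metis minus_diff_eq sgn_minus)+
    with g0 have "- (u1 + u2 + u3 + u4) = 0" by (simp add: algebra_simps)
    thus ?thesis by (simp only: neg_equal_0_iff_equal)
  qed
  define c where "c = u3 \<bullet> u4"
  define b where "b = u3 + u4"
  have u12: "u1 + u2 = - b" using usum unfolding b_def by (simp add: algebra_simps eq_neg_iff_add_eq_0)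
  have c12: "u1 \<bullet> u2 = c"
  proof -
    have "(u1 + u2) \<bullet> (u1 + u2) = b \<bullet> b" using u12 by simp
    hence "u1 \<bullet> u1 + 2 * (u1 \<bullet> u2) + u2 \<bullet> u2 = u3 \<bullet> u3 + 2 * (u3 \<bullet> u4) + u4 \<bullet> u4"
      unfolding b_def by (simp add: inner_add_left inner_add_right inner_commute)
    thus ?thesis using uu unfolding c_def by simp
  qed
  have cb: "-1 \<le> c" "c \<le> 1"
  proof -
    have "\<bar>u3 \<bullet> u4\<bar> \<le> norm u3 * norm u4" by (rule Cauchy_Schwarz_ineq2)
    thus "-1 \<le> c" "c \<le> 1" using nu unfolding c_def by auto
  qed
  define e where "e = A2 - A1"
  define d where "d = A3 - A4"
  have he: "e = r2 *\<^sub>R u2 - r1 *\<^sub>R u1" unfolding e_def by (simp add: Aeq(1,2))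
  have hd: "d = r3 *\<^sub>R u3 - r4 *\<^sub>R u4" unfolding d_def by (simp add: Aeq(3,4))
  have a12e: "a12 = norm e" unfolding a12_def e_def by (simp add: dist_norm norm_minus_commute)
  have a34d: "a34 = norm d" unfolding a34_def d_def by (simp add: dist_norm)
  have apos: "a12 > 0" "a34 > 0" using ne unfolding a12_def a34_def by auto
  have E1: "a12\<^sup>2 = r1\<^sup>2 + r2\<^sup>2 - 2*r1*r2*c"
  proof -
    have "a12\<^sup>2 = e \<bullet> e" unfolding a12e by (simp add: power2_norm_eq_inner)
    also have "\<dots> = r2*r2*(u2 \<bullet> u2) + r1*r1*(u1 \<bullet> u1) - 2*r1*r2*(u1 \<bullet> u2)"
      unfolding he by (simp add: inner_diff_left inner_diff_right inner_commute algebra_simps)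
    finally show ?thesis using uu c12 by (simp add: power2_eq_square)
  qed
  have E2: "a34\<^sup>2 = r3\<^sup>2 + r4\<^sup>2 - 2*r3*r4*c"
  proof -
    have "a34\<^sup>2 = d \<bullet> d" unfolding a34d by (simp add: power2_norm_eq_inner)
    also have "\<dots> = r3*r3*(u3 \<bullet> u3) + r4*r4*(u4 \<bullet> u4) - 2*r3*r4*(u3 \<bullet> u4)"
      unfolding hd by (simp add: inner_diff_left inner_diff_right inner_commute algebra_simps)
    finally show ?thesis using uu unfolding c_def by (simp add: power2_eq_square)
  qed
  define \<rho>1 where "\<rho>1 = r1*r2/(r1+r2)"
  define \<rho>2 where "\<rho>2 = r3*r4/(r3+r4)"
  define \<kappa> where "\<kappa> = \<rho>1 + \<rho>2"
  define \<tau>1 where "\<tau>1 = r1/(r1+r2)"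
  define \<tau>4 where "\<tau>4 = r4/(r3+r4)"
  have rhopos1: "\<rho>1 > 0" "\<rho>2 > 0" using rpos unfolding \<rho>1_def \<rho>2_def by simp_all
  have rhopos: "\<rho>1 > 0" "\<rho>2 > 0" "\<kappa> > 0" using rhopos1 unfolding \<kappa>_def by simp_all
  define Q where "Q = A1 + \<tau>1 *\<^sub>R e"
  define P where "P = A4 + \<tau>4 *\<^sub>R d"
  have QF: "Q = F - \<rho>1 *\<^sub>R b"
  proof -
    have "Q = F + (r1 - \<tau>1*r1) *\<^sub>R u1 + (\<tau>1*r2) *\<^sub>R u2"
      unfolding Q_def he by (simp add: Aeq(1) algebra_simps)
    also have "r1 - \<tau>1*r1 = \<rho>1" unfolding \<tau>1_def \<rho>1_def using rpos by (simp add: field_simps)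
    also have "\<tau>1*r2 = \<rho>1" unfolding \<tau>1_def \<rho>1_def using rpos by (simp add: field_simps)
    finally have "Q = F + \<rho>1 *\<^sub>R (u1 + u2)" by (simp add: algebra_simps)
    thus ?thesis using u12 by simp
  qed
  have PF: "P = F + \<rho>2 *\<^sub>R b"
  proof -
    have "P = F + (\<tau>4*r3) *\<^sub>R u3 + (r4 - \<tau>4*r4) *\<^sub>R u4"
      unfolding P_def hd by (simp add: Aeq(4) algebra_simps)
    also have "r4 - \<tau>4*r4 = \<rho>2" unfolding \<tau>4_def \<rho>2_def using rpos by (simp add: field_simps)
    also have "\<tau>4*r3 = \<rho>2" unfolding \<tau>4_def \<rho>2_def using rpos by (simp add: field_simps)
    finally show ?thesis unfolding b_def by (simp add: algebra_simps)
  qed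
  obtain \<alpha> where T12e: "T12 = A1 + \<alpha> *\<^sub>R e" using aff2[OF T12] unfolding e_def by blast
  obtain s1 where A1e: "A1'' = A1 + s1 *\<^sub>R e" using aff2[OF A1''] unfolding e_def by blast
  have "T34 \<in> affine hull {A4, A3}" using T34 by (simp add: insert_commute)
  then obtain \<beta> where T34e: "T34 = A4 + \<beta> *\<^sub>R d" using aff2 unfolding d_def by blast
  have "A4'' \<in> affine hull {A4, A3}" using A4'' by (simp add: insert_commute)
  then obtain s4 where A4e: "A4'' = A4 + s4 *\<^sub>R d" using aff2 unfolding d_def by blast
  have T12T34: "T12 \<noteq> T34"
  proof
    assume eq: "T12 = T34"
    have "(1-\<alpha>) *\<^sub>R A1 + \<alpha> *\<^sub>R A2 + (-\<beta>) *\<^sub>R A3 + (\<beta>-1) *\<^sub>R A4 = T12 - T34"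
      unfolding T12e T34e e_def d_def by (simp add: algebra_simps)
    hence h1: "(1-\<alpha>) *\<^sub>R A1 + \<alpha> *\<^sub>R A2 + (-\<beta>) *\<^sub>R A3 + (\<beta>-1) *\<^sub>R A4 = 0" using eq by simp
    have "1-\<alpha> = 0 \<and> \<alpha> = 0 \<and> -\<beta> = 0 \<and> \<beta>-1 = 0" by (rule indep4[OF nondeg h1]) simp
    then show False by (elim conjE) linarith
  qed
  obtain lam where Flam: "F = T12 + lam *\<^sub>R (T34 - T12)"
  proof -
    obtain p w where pw: "\<forall>x\<in>{F, T12, T34}. \<exists>c. x = p + c *\<^sub>R w" using FT unfolding collinear_alt by blast
    then obtain cF c1 c2 where "F = p + cF *\<^sub>R w" "T12 = p + c1 *\<^sub>R w" "T34 = p + c2 *\<^sub>R w" by blast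
    moreover have "c1 \<noteq> c2" using T12T34 calculation by auto
    ultimately have "F - T12 = (cF - c1) *\<^sub>R w" "T34 - T12 = (c2 - c1) *\<^sub>R w"
      "(cF - c1)/(c2 - c1) * (c2 - c1) = cF - c1" by (simp_all add: algebra_simps) (simp add: field_simps)
    hence "F - T12 = ((cF - c1)/(c2 - c1)) *\<^sub>R (T34 - T12)" by simp
    hence "F = T12 + ((cF - c1)/(c2 - c1)) *\<^sub>R (T34 - T12)" by (simp add: algebra_simps)
    thus ?thesis using that by blast
  qed
  define mu where "mu = \<rho>1 / \<kappa>"
  have Fmu: "F = Q + mu *\<^sub>R (P - Q)"
  proof -
    have "P - Q = \<kappa> *\<^sub>R b" unfolding QF PF \<kappa>_def by (simp add: algebra_simps)
    thus ?thesis unfolding mu_def using QF rhopos by simp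
  qed
  have mu01: "0 < mu" "mu < 1" unfolding mu_def \<kappa>_def using rhopos by (simp_all add: field_simps)
  define x1 where "x1 = (1-lam)*(1-\<alpha>) - (1-mu)*(1-\<tau>1)"
  define x2 where "x2 = (1-lam)*\<alpha> - (1-mu)*\<tau>1"
  define x3 where "x3 = lam*\<beta> - mu*\<tau>4"
  define x4 where "x4 = lam*(1-\<beta>) - mu*(1-\<tau>4)"
  have "x1 *\<^sub>R A1 + x2 *\<^sub>R A2 + x3 *\<^sub>R A3 + x4 *\<^sub>R A4
      = (T12 + lam *\<^sub>R (T34 - T12)) - (Q + mu *\<^sub>R (P - Q))"
    unfolding x1_def x2_def x3_def x4_def T12e T34e Q_def P_def e_def d_def by (simp add: algebra_simps)
  hence "x1 *\<^sub>R A1 + x2 *\<^sub>R A2 + x3 *\<^sub>R A3 + x4 *\<^sub>R A4 = 0" using Flam Fmu by simp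
  from indep4[OF nondeg this] have xz: "x1 = 0" "x2 = 0" "x3 = 0" "x4 = 0"
    unfolding x1_def x2_def x3_def x4_def by (simp_all add: algebra_simps)
  have lm: "lam = mu" using xz(1,2) unfolding x1_def x2_def by (simp add: algebra_simps)
  have "(1-mu)*(\<alpha> - \<tau>1) = 0" using xz(2) unfolding x2_def lm by (simp add: algebra_simps)
  hence "\<alpha> = \<tau>1" using mu01 by simp
  hence TQ: "T12 = Q" unfolding T12e Q_def by simp
  have "mu*(\<beta> - \<tau>4) = 0" using xz(3) unfolding x3_def lm by (simp add: algebra_simps)
  hence "\<beta> = \<tau>4" using mu01 by simp
  hence TP: "T34 = P" unfolding T34e P_def by simp
  have e0: "e \<noteq> 0" "d \<noteq> 0" using ne by (auto simp: e_def d_def)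
  have s1n: "s1 \<le> 0"
  proof -
    obtain w where w: "0 \<le> w" "w \<le> 1" "A1 = (1-w) *\<^sub>R A1'' + w *\<^sub>R A2"
      using pos1(2) unfolding closed_segment_def by blast
    have "((1-w)* s1 + w) *\<^sub>R e = ((1-w) *\<^sub>R A1'' + w *\<^sub>R A2) - A1"
      unfolding A1e e_def by (simp add: algebra_simps)
    hence "((1-w)* s1 + w) *\<^sub>R e = 0" using w(3) by simp
    hence eq: "(1-w)* s1 + w = 0" using e0 by simp
    show ?thesis
    proof (rule ccontr)
      assume a: "\<not> s1 \<le> 0"
      hence "(1-w)* s1 \<ge> 0" using w by simp
      hence "w = 0" using eq w by linarith
      thus False using eq a by simp
    qed
  qed
  have s4n: "s4 \<le> 0"
  proof -
    obtain w where w: "0 \<le> w" "w \<le> 1" "A4 = (1-w) *\<^sub>R A4'' + w *\<^sub>R A3"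
      using pos4(2) unfolding closed_segment_def by blast
    have "((1-w)* s4 + w) *\<^sub>R d = ((1-w) *\<^sub>R A4'' + w *\<^sub>R A3) - A4"
      unfolding A4e d_def by (simp add: algebra_simps)
    hence "((1-w)* s4 + w) *\<^sub>R d = 0" using w(3) by simp
    hence eq: "(1-w)* s4 + w = 0" using e0 by simp
    show ?thesis
    proof (rule ccontr)
      assume a: "\<not> s4 \<le> 0"
      hence "(1-w)* s4 \<ge> 0" using w by simp
      hence "w = 0" using eq w by linarith
      thus False using eq a by simp
    qed
  qed
  have taupos: "\<tau>1 > 0" "\<tau>4 > 0" using rpos unfolding \<tau>1_def \<tau>4_def by simp_all
  define p1 where "p1 = \<tau>1 - s1"
  define p4 where "p4 = \<tau>4 - s4"
  have t12v: "t12 = (r1/(r1+r2) - s1)*a12"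
  proof -
    have "A1'' - T12 = (- p1) *\<^sub>R e" unfolding A1e TQ Q_def p1_def by (simp add: algebra_simps)
    hence "t12 = \<bar>p1\<bar> * a12" unfolding t12_def dist_norm a12e by simp
    thus ?thesis using taupos s1n unfolding p1_def \<tau>1_def by simp
  qed
  have t34v: "t34 = (r4/(r3+r4) - s4)*a34"
  proof -
    have "A4'' - T34 = (- p4) *\<^sub>R d" unfolding A4e TP P_def p4_def by (simp add: algebra_simps)
    hence "t34 = \<bar>p4\<bar> * a34" unfolding t34_def dist_norm a34d by simp
    thus ?thesis using taupos s4n unfolding p4_def \<tau>4_def by simp
  qed
  have k1v: "k1 = -s1*a12"
  proof -
    have "A1'' - A1 = s1 *\<^sub>R e" unfolding A1e by simp
    hence "k1 = \<bar>s1\<bar> * a12" unfolding k1_def dist_norm a12e by simp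
    thus ?thesis using s1n by simp
  qed
  have k2v: "k2 = -s4*a34"
  proof -
    have "A4'' - A4 = s4 *\<^sub>R d" unfolding A4e by simp
    hence "k2 = \<bar>s4\<bar> * a34" unfolding k2_def dist_norm a34d by simp
    thus ?thesis using s4n by simp
  qed
  have half: "\<And>x::real^3. (1/2) *\<^sub>R x + (1/2) *\<^sub>R x = x"
    by (metis scaleR_add_left scaleR_one field_sum_of_halves)
  have mid1: "midpoint A1 A2 = A1 + (1/2) *\<^sub>R e"
    unfolding midpoint_eq_iff using half[of e] unfolding e_def by (simp add: algebra_simps)
  have mid2: "midpoint A3 A4 = A4 + (1/2) *\<^sub>R d"
    unfolding midpoint_eq_iff using half[of d] unfolding d_def by (simp add: algebra_simps)
  have m12v: "m12 = (1/2 - s1)*a12"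
  proof -
    have "A1'' - midpoint A1 A2 = (s1 - 1/2) *\<^sub>R e" unfolding A1e mid1 by (simp add: algebra_simps)
    hence "m12 = \<bar>s1 - 1/2\<bar> * a12" unfolding m12_def dist_norm a12e by simp
    thus ?thesis using s1n by simp
  qed
  have m34v: "m34 = (1/2 - s4)*a34"
  proof -
    have "A4'' - midpoint A3 A4 = (s4 - 1/2) *\<^sub>R d" unfolding A4e mid2 by (simp add: algebra_simps)
    hence "m34 = \<bar>s4 - 1/2\<bar> * a34" unfolding m34_def dist_norm a34d by simp
    thus ?thesis using s4n by simp
  qed
  define h where "h = A4'' - A1''"
  have Hh: "H = norm h" unfolding H_def h_def dist_norm by (simp add: norm_minus_commute)
  have Hpos: "H > 0"
  proof -
    have "A1'' \<noteq> A4''"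
    proof
      assume eq: "A1'' = A4''"
      have "(1-s1) *\<^sub>R A1 + s1 *\<^sub>R A2 + (-s4) *\<^sub>R A3 + (s4-1) *\<^sub>R A4 = A1'' - A4''"
        unfolding A1e A4e e_def d_def by (simp add: algebra_simps)
      hence h1: "(1-s1) *\<^sub>R A1 + s1 *\<^sub>R A2 + (-s4) *\<^sub>R A3 + (s4-1) *\<^sub>R A4 = 0" using eq by simp
      have "1-s1 = 0 \<and> s1 = 0 \<and> -s4 = 0 \<and> s4-1 = 0" by (rule indep4[OF nondeg h1]) simp
      then show False by (elim conjE) linarith
    qed
    thus ?thesis unfolding H_def by simp
  qed
  have he0: "h \<bullet> e = 0" "e \<bullet> h = 0" using perp1 unfolding h_def e_def by (simp_all add: inner_commute)
  have hd0: "h \<bullet> d = 0" "d \<bullet> h = 0" using perp2 unfolding h_def d_def by (simp_all add: inner_commute)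
  define ed where "ed = e \<bullet> d"
  have ed': "d \<bullet> e = ed" "e \<bullet> d = ed" unfolding ed_def by (simp_all add: inner_commute)
  have ee: "e \<bullet> e = a12\<^sup>2" unfolding a12e by (simp add: power2_norm_eq_inner)
  have dd: "d \<bullet> d = a34\<^sup>2" unfolding a34d by (simp add: power2_norm_eq_inner)
  have hh: "h \<bullet> h = H\<^sup>2" unfolding Hh by (simp add: power2_norm_eq_inner)
  have v1: "T34 - T12 = \<kappa> *\<^sub>R b" unfolding TP TQ PF QF \<kappa>_def by (simp add: algebra_simps)
  have v2: "T34 - T12 = h + p4 *\<^sub>R d - p1 *\<^sub>R e"
    unfolding h_def TP TQ P_def Q_def A1e A4e p1_def p4_def by (simp add: algebra_simps)
  have c34: "u3 \<bullet> u4 = c" unfolding c_def ..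
  have u43: "u4 \<bullet> u3 = c" unfolding c_def by (simp add: inner_commute)
  have u21: "u2 \<bullet> u1 = c" using c12 by (simp add: inner_commute)
  have I1a: "(T34 - T12) \<bullet> (T34 - T12) = H\<^sup>2 + p4\<^sup>2 * a34\<^sup>2 + p1\<^sup>2 * a12\<^sup>2 - 2*p1*p4*ed"
    unfolding v2 by (simp add: inner_add_left inner_add_right inner_diff_left inner_diff_right he0 hd0 ed' ee dd hh,
       simp add: ed_def power2_eq_square algebra_simps)
  have I1b: "(T34 - T12) \<bullet> (T34 - T12) = \<kappa>\<^sup>2 * (2 + 2*c)"
    unfolding v1 b_def by (simp add: inner_add_left inner_add_right uu u43 c34 power2_eq_square algebra_simps)
  have I2a: "(T34 - T12) \<bullet> d = p4 * a34\<^sup>2 - p1 * ed"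
    unfolding v2 by (simp add: inner_add_left inner_diff_left hd0 ed' dd)
  have I2b: "(T34 - T12) \<bullet> d = \<kappa>*(r3-r4)*(1+c)"
    unfolding v1 b_def hd by (simp add: inner_add_left inner_diff_right uu u43 c34 algebra_simps)
  have I3a: "(T34 - T12) \<bullet> e = p4 * ed - p1 * a12\<^sup>2"
    unfolding v2 by (simp add: inner_add_left inner_diff_left he0 ed' ee)
  have I3b: "(T34 - T12) \<bullet> e = \<kappa>*(r1-r2)*(1+c)"
  proof -
    have "(T34 - T12) \<bullet> e = - \<kappa> * ((u1 + u2) \<bullet> e)" unfolding v1 u12[symmetric] using u12 by simp
    also have "(u1 + u2) \<bullet> e = r2*c - r1 + r2 - r1*c"
      unfolding he by (simp add: inner_add_left inner_diff_right uu c12 u21 algebra_simps)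
    finally show ?thesis by (simp add: algebra_simps)
  qed
  define C where "C = ed / (a12 * a34)"
  have Cb: "-1 \<le> C" "C \<le> 1"
  proof -
    have "\<bar>ed\<bar> \<le> a12 * a34" unfolding ed_def a12e a34d by (rule Cauchy_Schwarz_ineq2)
    hence "\<bar>C\<bar> \<le> 1" unfolding C_def using apos by (simp add: abs_div divide_le_eq_1 abs_mult)
    thus "-1 \<le> C" "C \<le> 1" by auto
  qed
  have cosphi: "cos \<phi> = C"
    unfolding \<phi>_def vec_angle_def using Cb unfolding C_def ed_def e_def d_def a12e a34d
    by (simp add: cos_arccos)
  have sinphi: "(sin \<phi>)\<^sup>2 = 1 - (cos \<phi>)\<^sup>2" by (rule sin_squared_eq)
  have edC: "ed = C * a12 * a34" unfolding C_def using apos by simp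
  have E3: "H\<^sup>2 + t12\<^sup>2 + t34\<^sup>2 - 2*t12*t34*cos \<phi> = \<kappa>\<^sup>2*(2+2*c)"
  proof -
    have "t12 = p1 * a12" "t34 = p4 * a34" unfolding t12v t34v p1_def p4_def \<tau>1_def \<tau>4_def by simp_all
    thus ?thesis using I1a I1b unfolding cosphi edC by (simp add: power2_eq_square algebra_simps)
  qed
  have E4: "a34*(t34 - t12*cos \<phi>) = \<kappa>*(r3-r4)*(1+c)"
  proof -
    have "t12 = p1 * a12" "t34 = p4 * a34" unfolding t12v t34v p1_def p4_def \<tau>1_def \<tau>4_def by simp_all
    thus ?thesis using I2a I2b unfolding cosphi edC by (simp add: power2_eq_square algebra_simps)
  qed
  have E5: "a12*(t34*cos \<phi> - t12) = \<kappa>*(r1-r2)*(1+c)"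
  proof -
    have "t12 = p1 * a12" "t34 = p4 * a34" unfolding t12v t34v p1_def p4_def \<tau>1_def \<tau>4_def by simp_all
    thus ?thesis using I3a I3b unfolding cosphi edC by (simp add: power2_eq_square algebra_simps)
  qed
  have kap: "\<kappa> = r1*r2/(r1+r2) + r3*r4/(r3+r4)" unfolding \<kappa>_def \<rho>1_def \<rho>2_def ..
  have thc: "\<theta> = arccos c"
  proof -
    have "A4 - F = r4 *\<^sub>R u4" "A3 - F = r3 *\<^sub>R u3" by (simp_all add: Aeq(3,4))
    hence "(A4 - F) \<bullet> (A3 - F) / (norm (A4 - F) * norm (A3 - F)) = c"
      using rpos nu u43 by simp
    thus ?thesis unfolding \<theta>_def pt_angle_def vec_angle_def by simp
  qed
  have tanv: "tan (\<theta> / 2) = sqrt (1 - c\<^sup>2) / (1 + c)"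
  proof -
    have "tan (\<theta> / 2) = sin \<theta> / (cos \<theta> + 1)" using tan_half[of "\<theta>/2"] by simp
    thus ?thesis unfolding thc using cb by (simp add: sin_arccos cos_arccos add.commute)
  qed
  have cotv: "cot (\<theta> / 2) = (1 + c) / sqrt (1 - c\<^sup>2)"
  proof -
    have "cot (\<theta> / 2) = 1 / tan (\<theta> / 2)" by (simp add: cot_def tan_def)
    thus ?thesis unfolding tanv by simp
  qed
  note X = scalar_core[OF rpos Hpos apos cb kap t12v t34v k1v k2v m12v m34v E1 E2 E3 E4 E5 sinphi]
  show ?thesis unfolding tanv cotv by (rule X)
qed
end
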